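(* Let $\xi_0,\xi_1,\xi_2,\ldots$ be independent and identically distributed real random variables. Suppose $\xi_0$ has zero mean and finite positive variance, and that the moment generating function of $\xi_0$ exists (is finite) on an open interval around zero. For $n\ge 1$ let $\mathcal{T}^{sym}_n$ be the $n\times n$ random symmetric Toeplitz matrix whose $(i,j)$ entry is $\xi_{|i-j|}$ for $1\le i,j\le n$. Then there exist constants $C_0,C_1>0$ depending only on the distribution of $\xi_0$ such that \[ \mathbb{P}\left(\sigma_{\max}(\mathcal{T}^{sym}_n)\geq C_0\left((2n)\log(2n)\right)^{1/2}\right)\leq \frac{C_1}{(2n)^2}. \]
   Context: $\sigma_{\max}(A)$ denotes the largest singular value of a matrix $A$ (its operator norm). *)

theory Defs
  imports "HOL-Probability.Probability"
begin

text \<open>The n x n symmetric Toeplitz matrix with entries a_{|i-j|}, rows and columns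
  indexed by 0..n-1 (equivalently 1..n).\<close>
definition sym_toeplitz :: "(nat \<Rightarrow> real) \<Rightarrow> nat \<Rightarrow> nat \<Rightarrow> real" where
  "sym_toeplitz a i j = a (if i \<le> j then j - i else i - j)"

text \<open>Largest singular value (= operator norm w.r.t. the Euclidean norm) of an n x n
  real matrix A, given entrywise for indices i, j < n.\<close>
definition sigma_max :: "nat \<Rightarrow> (nat \<Rightarrow> nat \<Rightarrow> real) \<Rightarrow> real" where
  "sigma_max n A = Sup {sqrt (\<Sum>i<n. (\<Sum>j<n. A i j * x j)^2) | x. (\<Sum>j<n. (x j)^2) \<le> 1}"

end

theory Submission
  imports Defs "HOL-Library.Real_Mod"
begin

lemma orth_cos:
  fixes e :: int and n :: nat
  assumes n: "n > 0" and e: "\<bar>e\<bar> < 2 * int n"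
  shows "(\<Sum>m<2*n. cos (pi * real m * real_of_int e / real n)) = (if e = 0 then real (2*n) else 0)"
proof (cases "e = 0")
  case True then show ?thesis by simp
next
  case False
  define z where "z = cis (pi * real_of_int e / real n)"
  have pw: "z ^ m = cis (pi * real m * real_of_int e / real n)" for m
  proof -
    have "z ^ m = cis (real m * (pi * real_of_int e / real n))" unfolding z_def by (rule Complex.DeMoivre)
    then show ?thesis by (simp add: mult_ac)
  qed
  have z1: "z \<noteq> 1"
  proof
    assume "z = 1"
    then obtain k :: int where k: "pi * real_of_int e / real n = of_int k * (2 * pi)"
      using \<open>z = 1\<close> unfolding z_def cis_eq_1_iff by blast
    then have "real_of_int e = real_of_int k * 2 * real n" using n by (simp add: field_simps)
    then have "e = k * 2 * int n" by (metis of_int_eq_iff of_int_mult of_int_of_nat_eq of_int_numeral)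
    then have ea: "\<bar>e\<bar> = \<bar>k\<bar> * (2 * int n)" by (simp add: abs_mult)
    have "k \<noteq> 0" using False \<open>e = k * 2 * int n\<close> by auto
    then have "\<bar>k\<bar> \<ge> 1" by linarith
    then have "\<bar>k\<bar> * (2 * int n) \<ge> 1 * (2 * int n)" by (intro mult_right_mono) auto
    with ea e show False by simp
  qed
  have zN: "z ^ (2*n) = 1"
  proof -
    have "z ^ (2*n) = cis (2 * pi * real_of_int e)" unfolding pw using n by (simp add: field_simps)
    also have "\<dots> = 1" by (rule cis_multiple_2pi) simp
    finally show ?thesis .
  qed
  have "(\<Sum>m<2*n. z ^ m) = 0" using z1 zN by (simp add: sum_gp_strict)
  then have "Re (\<Sum>m<2*n. z ^ m) = 0" by simp
  then show ?thesis using False by (simp add: pw Re_sum cis.sel)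
qed

definition wt :: "nat \<Rightarrow> nat \<Rightarrow> nat \<Rightarrow> real" where
  "wt n m k = (if k = 0 then 1 else 2 * cos (pi * real m * real k / real n))"

definition lam :: "nat \<Rightarrow> (nat \<Rightarrow> real) \<Rightarrow> nat \<Rightarrow> real" where
  "lam n a m = (\<Sum>k<n. wt n m k * a k)"

lemma coef_lemma:
  fixes d :: int
  assumes n: "n > 0" and k: "k < n" and d: "\<bar>d\<bar> < int n"
  shows "(\<Sum>m<2*n. wt n m k * cos (pi * real m * real_of_int d / real n))
         = (if int k = \<bar>d\<bar> then real (2*n) else 0)"
proof (cases "k = 0")
  case True
  have "\<bar>d\<bar> < 2 * int n" using d by linarith
  then show ?thesis using True orth_cos[OF n, of d] by (simp add: wt_def)
next
  case False
  have eq: "wt n m k * cos (pi * real m * real_of_int d / real n)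
     = cos (pi * real m * real_of_int (int k - d) / real n) + cos (pi * real m * real_of_int (int k + d) / real n)" for m
  proof -
    have "wt n m k * cos (pi * real m * real_of_int d / real n)
       = 2 * (cos (pi * real m * real k / real n) * cos (pi * real m * real_of_int d / real n))"
      using False by (simp add: wt_def)
    also have "\<dots> = cos (pi * real m * real k / real n - pi * real m * real_of_int d / real n)
                   + cos (pi * real m * real k / real n + pi * real m * real_of_int d / real n)"
      by (simp add: cos_times_cos)
    also have "\<dots> = cos (pi * real m * real_of_int (int k - d) / real n) + cos (pi * real m * real_of_int (int k + d) / real n)"
    proof -
      have e1: "pi * real m * real k / real n - pi * real m * real_of_int d / real n = pi * real m * real_of_int (int k - d) / real n"
      proof -
        have "pi * real m * real_of_int (int k - d) = pi * real m * real k - pi * real m * real_of_int d"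
          by (simp add: right_diff_distrib)
        then show ?thesis by (simp add: diff_divide_distrib)
      qed
      have e2: "pi * real m * real k / real n + pi * real m * real_of_int d / real n = pi * real m * real_of_int (int k + d) / real n"
      proof -
        have "pi * real m * real_of_int (int k + d) = pi * real m * real k + pi * real m * real_of_int d"
          by (simp add: distrib_left)
        then show ?thesis by (simp add: add_divide_distrib)
      qed
      show ?thesis unfolding e1 e2 ..
    qed
    finally show ?thesis .
  qed
  have b1: "\<bar>int k - d\<bar> < 2 * int n" using k d by linarith
  have b2: "\<bar>int k + d\<bar> < 2 * int n" using k d by linarith
  show ?thesis
    unfolding eq sum.distrib orth_cos[OF n b1] orth_cos[OF n b2] using False by auto
qed

lemma toeplitz_fourier:
  assumes n: "n > 0" and i: "i < n" and j: "j < n"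
  shows "sym_toeplitz a i j = (1 / real (2*n)) *
     (\<Sum>m<2*n. lam n a m * cos (pi * real m * (real i - real j) / real n))"
proof -
  define d where "d = int i - int j"
  have d: "\<bar>d\<bar> < int n" using i j unfolding d_def by linarith
  have c: "real i - real j = real_of_int d" unfolding d_def by simp
  have "(\<Sum>m<2*n. lam n a m * cos (pi * real m * (real i - real j) / real n))
      = (\<Sum>m<2*n. \<Sum>k<n. a k * (wt n m k * cos (pi * real m * real_of_int d / real n)))"
    unfolding lam_def c by (simp add: sum_distrib_right mult_ac)
  also have "\<dots> = (\<Sum>k<n. a k * (\<Sum>m<2*n. wt n m k * cos (pi * real m * real_of_int d / real n)))"
    by (subst sum.swap) (simp add: sum_distrib_left)
  also have "\<dots> = (\<Sum>k<n. a k * (if int k = \<bar>d\<bar> then real (2*n) else 0))"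
    by (intro sum.cong refl) (simp add: coef_lemma[OF n _ d])
  also have "\<dots> = (\<Sum>k<n. if k = nat \<bar>d\<bar> then a k * real (2*n) else 0)"
    by (intro sum.cong refl) auto
  also have "\<dots> = a (nat \<bar>d\<bar>) * real (2*n)"
  proof -
    have "nat \<bar>d\<bar> < n" using d by linarith
    then show ?thesis by (simp add: sum.delta)
  qed
  finally have "(\<Sum>m<2*n. lam n a m * cos (pi * real m * (real i - real j) / real n)) = a (nat \<bar>d\<bar>) * real (2*n)" .
  moreover have "sym_toeplitz a i j = a (nat \<bar>d\<bar>)"
    unfolding sym_toeplitz_def d_def by (rule arg_cong[where f=a]) auto
  ultimately show ?thesis using n by simp
qed

lemma quad_cos:
  "(\<Sum>i<n. \<Sum>j<n. x i * x j * cos (t * (real i - real j)))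
   = (\<Sum>i<n. x i * cos (t * real i))^2 + (\<Sum>i<n. x i * sin (t * real i))^2"
  unfolding power2_eq_square sum_product
  by (simp add: right_diff_distrib cos_diff sum.distrib[symmetric] algebra_simps)

lemma swap3: "(\<Sum>i\<in>A. \<Sum>j\<in>B. \<Sum>m\<in>C. f m i j) = (\<Sum>m\<in>C. \<Sum>i\<in>A. \<Sum>j\<in>B. f m i j)"
proof -
  have "(\<Sum>i\<in>A. \<Sum>j\<in>B. \<Sum>m\<in>C. f m i j) = (\<Sum>i\<in>A. \<Sum>m\<in>C. \<Sum>j\<in>B. f m i j)"
    by (intro sum.cong refl) (rule sum.swap)
  also have "\<dots> = (\<Sum>m\<in>C. \<Sum>i\<in>A. \<Sum>j\<in>B. f m i j)" by (rule sum.swap)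
  finally show ?thesis .
qed

definition QQ :: "nat \<Rightarrow> (nat \<Rightarrow> real) \<Rightarrow> nat \<Rightarrow> real" where
  "QQ n x m = (\<Sum>i<n. x i * cos (pi * real m / real n * real i))^2 + (\<Sum>i<n. x i * sin (pi * real m / real n * real i))^2"

lemma quad_form:
  assumes n: "n > 0"
  shows "(\<Sum>i<n. \<Sum>j<n. x i * x j * sym_toeplitz a i j) = (1 / real (2*n)) * (\<Sum>m<2*n. lam n a m * QQ n x m)"
proof -
  have "(\<Sum>i<n. \<Sum>j<n. x i * x j * sym_toeplitz a i j)
     = (\<Sum>i<n. \<Sum>j<n. (1 / real (2*n)) * (\<Sum>m<2*n. lam n a m * (x i * x j * cos (pi * real m / real n * (real i - real j)))))"
    by (intro sum.cong refl, simp add: toeplitz_fourier[OF n] sum_distrib_left sum_distrib_right mult_ac)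
  also have "\<dots> = (1 / real (2*n)) * (\<Sum>m<2*n. lam n a m * (\<Sum>i<n. \<Sum>j<n. x i * x j * cos (pi * real m / real n * (real i - real j))))"
  proof -
    have "(\<Sum>m<2*n. lam n a m * (\<Sum>i<n. \<Sum>j<n. x i * x j * cos (pi * real m / real n * (real i - real j))))
        = (\<Sum>m<2*n. \<Sum>i<n. \<Sum>j<n. lam n a m * (x i * x j * cos (pi * real m / real n * (real i - real j))))"
      by (simp add: sum_distrib_left)
    also have "\<dots> = (\<Sum>i<n. \<Sum>j<n. \<Sum>m<2*n. lam n a m * (x i * x j * cos (pi * real m / real n * (real i - real j))))"
      by (rule swap3[symmetric])
    finally show ?thesis by (simp add: sum_distrib_left)
  qed
  also have "\<dots> = (1 / real (2*n)) * (\<Sum>m<2*n. lam n a m * QQ n x m)"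
    unfolding QQ_def quad_cos ..
  finally show ?thesis .
qed

lemma QQ_sum:
  assumes n: "n > 0"
  shows "(\<Sum>m<2*n. QQ n x m) = real (2*n) * (\<Sum>i<n. (x i)^2)"
proof -
  have "(\<Sum>m<2*n. QQ n x m) = (\<Sum>m<2*n. \<Sum>i<n. \<Sum>j<n. x i * x j * cos (pi * real m * real_of_int (int i - int j) / real n))"
    unfolding QQ_def quad_cos[symmetric] by (intro sum.cong refl) (simp add: field_simps)
  also have "\<dots> = (\<Sum>i<n. \<Sum>j<n. x i * x j * (\<Sum>m<2*n. cos (pi * real m * real_of_int (int i - int j) / real n)))"
    by (simp add: sum_distrib_left sum.swap[of _ "{..<2*n}"])
  also have "\<dots> = (\<Sum>i<n. \<Sum>j<n. if j = i then real (2*n) * (x i)^2 else 0)"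
  proof (intro sum.cong refl)
    fix i j assume "i \<in> {..<n}" "j \<in> {..<n}"
    then have "\<bar>int i - int j\<bar> < 2 * int n" by auto
    then have h: "(\<Sum>m<2*n. cos (pi * real m * real_of_int (int i - int j) / real n)) = (if int i - int j = 0 then real (2*n) else 0)"
      by (rule orth_cos[OF n])
    show "x i * x j * (\<Sum>m<2*n. cos (pi * real m * real_of_int (int i - int j) / real n)) = (if j = i then real (2*n) * (x i)^2 else 0)"
      unfolding h by (cases "j = i") (simp_all add: power2_eq_square)
  qed
  also have "\<dots> = real (2*n) * (\<Sum>i<n. (x i)^2)"
    by (simp add: sum_distrib_left)
  finally show ?thesis .
qed

lemma QQ_nonneg: "QQ n x m \<ge> 0" unfolding QQ_def by simp

lemma quad_bound:
  assumes n: "n > 0" and L: "\<And>m. m < 2*n \<Longrightarrow> \<bar>lam n a m\<bar> \<le> L"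
  shows "\<bar>\<Sum>i<n. \<Sum>j<n. x i * x j * sym_toeplitz a i j\<bar> \<le> L * (\<Sum>i<n. (x i)^2)"
proof -
  have "\<bar>\<Sum>m<2*n. lam n a m * QQ n x m\<bar> \<le> (\<Sum>m<2*n. \<bar>lam n a m * QQ n x m\<bar>)" by (rule sum_abs)
  also have "\<dots> \<le> (\<Sum>m<2*n. L * QQ n x m)"
    by (intro sum_mono) (auto simp: abs_mult QQ_nonneg intro!: mult_right_mono L)
  also have "\<dots> = L * (real (2*n) * (\<Sum>i<n. (x i)^2))" by (simp add: sum_distrib_left[symmetric] QQ_sum[OF n])
  finally show ?thesis using n unfolding quad_form[OF n] by (simp add: abs_mult field_simps)
qed



lemma op_bound:
  fixes T :: "nat \<Rightarrow> nat \<Rightarrow> real"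
  assumes sym: "\<And>i j. T i j = T j i" and L: "L \<ge> 0"
    and q: "\<And>u. \<bar>\<Sum>i<n. \<Sum>j<n. u i * u j * T i j\<bar> \<le> L * (\<Sum>i<n. (u i)^2)"
    and x: "(\<Sum>j<n. (x j)^2) \<le> 1"
  shows "(\<Sum>i<n. (\<Sum>j<n. T i j * x j)^2) \<le> L^2"
proof -
  define y where "y i = (\<Sum>j<n. T i j * x j)" for i
  define s where "s = (\<Sum>i<n. (y i)^2)"
  define X where "X = (\<Sum>i<n. (x i)^2)"
  have s0: "s \<ge> 0" unfolding s_def by (simp add: sum_nonneg)
  have B1: "(\<Sum>i<n. \<Sum>j<n. x i * y j * T i j) = s"
  proof -
    have "(\<Sum>i<n. \<Sum>j<n. x i * y j * T i j) = (\<Sum>j<n. \<Sum>i<n. x i * y j * T i j)" by (rule sum.swap)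
    also have "\<dots> = (\<Sum>j<n. \<Sum>i<n. y j * (T j i * x i))"
    proof (intro sum.cong refl)
      fix j i
      have "T i j = T j i" by (rule sym)
      then show "x i * y j * T i j = y j * (T j i * x i)" by (simp add: mult_ac)
    qed
    also have "\<dots> = (\<Sum>j<n. y j * (\<Sum>i<n. T j i * x i))"
      by (simp only: sum_distrib_left)
    also have "\<dots> = s" unfolding s_def power2_eq_square y_def[symmetric] ..
    finally show ?thesis .
  qed
  have B2: "(\<Sum>i<n. \<Sum>j<n. y i * x j * T i j) = s"
  proof -
    have "(\<Sum>i<n. \<Sum>j<n. y i * x j * T i j) = (\<Sum>i<n. y i * (\<Sum>j<n. T i j * x j))"
      by (simp add: sum_distrib_left mult_ac)
    also have "\<dots> = s" unfolding s_def power2_eq_square y_def[symmetric] ..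
    finally show ?thesis .
  qed
  have main: "4 * t * s \<le> L * (2 * X + 2 * t^2 * s)" for t
  proof -
    let ?p = "\<lambda>i. x i + t * y i" and ?m = "\<lambda>i. x i - t * y i"
    have diff: "(\<Sum>i<n. \<Sum>j<n. ?p i * ?p j * T i j) - (\<Sum>i<n. \<Sum>j<n. ?m i * ?m j * T i j)
        = (\<Sum>i<n. \<Sum>j<n. 2 * t * (x i * y j * T i j) + 2 * t * (y i * x j * T i j))"
      unfolding sum_subtractf[symmetric] by (intro sum.cong refl) (simp add: algebra_simps)
    also have "\<dots> = 4 * t * s"
    proof -
      have "(\<Sum>i<n. \<Sum>j<n. 2 * t * (x i * y j * T i j) + 2 * t * (y i * x j * T i j))
         = 2 * t * (\<Sum>i<n. \<Sum>j<n. x i * y j * T i j) + 2 * t * (\<Sum>i<n. \<Sum>j<n. y i * x j * T i j)"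
        by (simp only: sum.distrib sum_distrib_left)
      then show ?thesis using B1 B2 by simp
    qed
    finally have d: "(\<Sum>i<n. \<Sum>j<n. ?p i * ?p j * T i j) - (\<Sum>i<n. \<Sum>j<n. ?m i * ?m j * T i j) = 4 * t * s" .
    have nrm: "(\<Sum>i<n. (?p i)^2) + (\<Sum>i<n. (?m i)^2) = 2 * X + 2 * t^2 * s"
    proof -
      have "(\<Sum>i<n. (?p i)^2) + (\<Sum>i<n. (?m i)^2) = (\<Sum>i<n. 2 * (x i)^2 + 2 * t^2 * (y i)^2)"
        unfolding sum.distrib[symmetric] by (intro sum.cong refl) (simp add: power2_eq_square algebra_simps)
      also have "\<dots> = 2 * X + 2 * t^2 * s" unfolding X_def s_def by (simp only: sum.distrib sum_distrib_left)
      finally show ?thesis .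
    qed
    have "(\<Sum>i<n. \<Sum>j<n. ?p i * ?p j * T i j) \<le> L * (\<Sum>i<n. (?p i)^2)" by (rule order_trans[OF abs_ge_self q])
    moreover have "- (\<Sum>i<n. \<Sum>j<n. ?m i * ?m j * T i j) \<le> L * (\<Sum>i<n. (?m i)^2)" by (rule order_trans[OF abs_ge_minus_self q])
    ultimately have "4 * t * s \<le> L * (\<Sum>i<n. (?p i)^2) + L * (\<Sum>i<n. (?m i)^2)" using d by linarith
    also have "\<dots> = L * (2 * X + 2 * t^2 * s)" by (simp only: distrib_left[symmetric] nrm)
    finally show ?thesis .
  qed
  have X1: "X \<le> 1" using x unfolding X_def .
  have fin: "s \<le> L^2"
  proof (cases "L = 0")
    case True
    then have "4 * s \<le> 0" using main[of 1] by simp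
    then show ?thesis using True by simp
  next
    case False
    then have Lp: "L > 0" using L by simp
    have "4 * (1/L) * s \<le> L * (2 * X + 2 * (1/L)^2 * s)" by (rule main)
    also have "\<dots> \<le> L * (2 + 2 * (1/L)^2 * s)" using X1 Lp by (intro mult_left_mono) auto
    finally have "4 * s / L \<le> 2 * L + 2 * s / L" using Lp by (simp add: field_simps power2_eq_square)
    then have "2 * s / L \<le> 2 * L" by simp
    then have "s \<le> L * L" using Lp by (simp add: field_simps)
    then show ?thesis by (simp add: power2_eq_square)
  qed
  then show ?thesis unfolding s_def y_def .
qed

lemma sigma_max_le:
  fixes T :: "nat \<Rightarrow> nat \<Rightarrow> real"
  assumes sym: "\<And>i j. T i j = T j i" and L: "L \<ge> 0"
    and q: "\<And>u. \<bar>\<Sum>i<n. \<Sum>j<n. u i * u j * T i j\<bar> \<le> L * (\<Sum>i<n. (u i)^2)"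
  shows "sigma_max n T \<le> L"
  unfolding sigma_max_def
proof (rule cSup_least)
  show "{sqrt (\<Sum>i<n. (\<Sum>j<n. T i j * x j)^2) | x. (\<Sum>j<n. (x j)^2) \<le> 1} \<noteq> {}"
  proof -
    have "sqrt (\<Sum>i<n. (\<Sum>j<n. T i j * (\<lambda>_::nat. 0::real) j)^2) \<in> {sqrt (\<Sum>i<n. (\<Sum>j<n. T i j * x j)^2) | x. (\<Sum>j<n. (x j)^2) \<le> 1}"
      by (intro CollectI exI[of _ "\<lambda>_::nat. 0::real"] conjI refl) simp
    then show ?thesis by (metis empty_iff)
  qed
next
  fix z assume "z \<in> {sqrt (\<Sum>i<n. (\<Sum>j<n. T i j * x j)^2) | x. (\<Sum>j<n. (x j)^2) \<le> 1}"
  then obtain x where z: "z = sqrt (\<Sum>i<n. (\<Sum>j<n. T i j * x j)^2)" and x: "(\<Sum>j<n. (x j)^2) \<le> 1" by blast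
  have "(\<Sum>i<n. (\<Sum>j<n. T i j * x j)^2) \<le> L^2" by (rule op_bound[OF sym L q x])
  then have "z \<le> sqrt (L^2)" unfolding z by (rule real_sqrt_le_mono)
  then show "z \<le> L" using L by simp
qed



lemma exp_convex_pt:
  fixes l r :: real assumes "0 \<le> l" "l \<le> 1"
  shows "exp (l * r) \<le> 1 - l + l * exp r"
proof -
  have "exp ((1 - l) *\<^sub>R 0 + l *\<^sub>R r) \<le> (1 - l) * exp 0 + l * exp r"
    by (rule convex_onD[OF exp_convex]) (use assms in auto)
  then show ?thesis by simp
qed

lemma h_scale:
  fixes l r :: real assumes l: "0 \<le> l" "l \<le> 1" and r: "0 \<le> r"
  shows "exp (l * r) - 1 - l * r \<le> l^2 * (exp r - 1 - r)"
proof -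
  define \<psi> where "\<psi> x = l^2 * (exp x - 1 - x) - (exp (l * x) - 1 - l * x)" for x
  have "\<psi> 0 \<le> \<psi> r"
  proof (rule DERIV_nonneg_imp_nondecreasing[OF r])
    fix x :: real assume x: "0 \<le> x" "x \<le> r"
    have d: "DERIV \<psi> x :> l^2 * (exp x - 1) - (exp (l * x) * l - l)"
      unfolding \<psi>_def by (auto intro!: derivative_eq_intros)
    have "exp (l * x) \<le> 1 - l + l * exp x" by (rule exp_convex_pt[OF l])
    then have "l * (exp (l * x) - 1) \<le> l * (l * (exp x - 1))"
      using l by (intro mult_left_mono) (auto simp: algebra_simps)
    then have "l^2 * (exp x - 1) - (exp (l * x) * l - l) \<ge> 0"
      by (simp add: power2_eq_square algebra_simps)
    with d show "\<exists>y. DERIV \<psi> x :> y \<and> y \<ge> 0" by blast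
  qed
  then show ?thesis unfolding \<psi>_def by simp
qed

lemma sinh_ge:
  fixes r :: real assumes r: "0 \<le> r"
  shows "2 * r \<le> exp r - exp (- r)"
proof -
  define \<psi> where "\<psi> x = exp x - exp (- x) - 2 * x" for x :: real
  have "\<psi> 0 \<le> \<psi> r"
  proof (rule DERIV_nonneg_imp_nondecreasing[OF r])
    fix x :: real assume x: "0 \<le> x" "x \<le> r"
    have d: "DERIV \<psi> x :> exp x + exp (- x) - 2"
      unfolding \<psi>_def by (auto intro!: derivative_eq_intros)
    have "exp x + exp (- x) \<ge> 2"
    proof -
      have "0 \<le> (exp (x/2) - exp (-(x/2)))^2" by simp
      also have "\<dots> = exp x + exp (- x) - 2"
        by (simp add: power2_eq_square algebra_simps flip: exp_add)
      finally show ?thesis by simp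
    qed
    with d show "\<exists>y. DERIV \<psi> x :> y \<and> y \<ge> 0" by (intro exI[of _ "exp x + exp (- x) - 2"]) auto
  qed
  then show ?thesis unfolding \<psi>_def by simp
qed

lemma h_abs:
  fixes y :: real
  shows "exp y - 1 - y \<le> exp \<bar>y\<bar> - 1 - \<bar>y\<bar>"
proof (cases "y \<ge> 0")
  case True then show ?thesis by simp
next
  case False
  have "2 * (- y) \<le> exp (- y) - exp (- (- y))" by (rule sinh_ge) (use False in auto)
  then show ?thesis using False by simp
qed

lemma exp_pointwise:
  fixes u z a :: real assumes a: "a > 0" and u: "\<bar>u\<bar> \<le> a"
  shows "exp (u * z) \<le> 1 + u * z + (u / a)^2 * (exp (a * z) + exp (- (a * z)))"
proof -
  define l where "l = \<bar>u\<bar> / a"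
  define r where "r = a * \<bar>z\<bar>"
  have l: "0 \<le> l" "l \<le> 1" unfolding l_def using a u by auto
  have r: "0 \<le> r" unfolding r_def using a by simp
  have yr: "\<bar>u * z\<bar> = l * r" unfolding l_def r_def using a by (simp add: abs_mult)
  have "exp (u * z) - 1 - u * z \<le> exp \<bar>u * z\<bar> - 1 - \<bar>u * z\<bar>" by (rule h_abs)
  also have "\<dots> \<le> l^2 * (exp r - 1 - r)" unfolding yr by (rule h_scale[OF l r])
  also have "\<dots> \<le> l^2 * exp r" using r by (intro mult_left_mono) auto
  also have "exp r \<le> exp (a * z) + exp (- (a * z))"
    unfolding r_def by (cases "z \<ge> 0") (auto simp: abs_if)
  then have "l^2 * exp r \<le> l^2 * (exp (a * z) + exp (- (a * z)))" by (intro mult_left_mono) auto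
  also have "l^2 = (u / a)^2" unfolding l_def by (simp add: power2_eq_square)
  finally show ?thesis by simp
qed


context prob_space
begin

lemma mgf_bound:
  fixes X :: "'a \<Rightarrow> real"
  assumes intX: "integrable M X" and mean: "expectation X = 0" and a: "a > 0"
    and ia: "\<And>u. \<bar>u\<bar> \<le> a \<Longrightarrow> integrable M (\<lambda>\<omega>. exp (u * X \<omega>))"
    and u: "\<bar>u\<bar> \<le> a"
  shows "expectation (\<lambda>\<omega>. exp (u * X \<omega>))
     \<le> exp ((expectation (\<lambda>\<omega>. exp (a * X \<omega>)) + expectation (\<lambda>\<omega>. exp ((-a) * X \<omega>))) / a^2 * u^2)"
proof -
  define E1 where "E1 = expectation (\<lambda>\<omega>. exp (a * X \<omega>))"
  define E2 where "E2 = expectation (\<lambda>\<omega>. exp ((-a) * X \<omega>))"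
  have i1: "integrable M (\<lambda>\<omega>. exp (a * X \<omega>))" using ia[of a] a by simp
  have i2: "integrable M (\<lambda>\<omega>. exp ((-a) * X \<omega>))" using ia[of "-a"] a by simp
  have iR: "integrable M (\<lambda>\<omega>. 1 + u * X \<omega> + (u / a)^2 * (exp (a * X \<omega>) + exp ((-a) * X \<omega>)))"
    using intX i1 i2 by (intro Bochner_Integration.integrable_add integrable_mult_right integrable_const) auto
  have "expectation (\<lambda>\<omega>. exp (u * X \<omega>)) \<le> expectation (\<lambda>\<omega>. 1 + u * X \<omega> + (u / a)^2 * (exp (a * X \<omega>) + exp ((-a) * X \<omega>)))"
    by (rule integral_mono[OF ia[OF u] iR]) (use exp_pointwise[OF a u] in simp)
  also have "\<dots> = 1 + u * expectation X + (u / a)^2 * (E1 + E2)"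
    unfolding E1_def E2_def
    using intX i1 i2 by (simp add: Bochner_Integration.integral_add integrable_mult_right prob_space)
  also have "\<dots> = 1 + (E1 + E2) / a^2 * u^2" using mean a by (simp add: power_divide)
  also have "\<dots> \<le> exp ((E1 + E2) / a^2 * u^2)" by (rule exp_ge_add_one_self)
  finally show ?thesis unfolding E1_def E2_def .
qed


lemma chernoff_sum:
  fixes \<xi> :: "nat \<Rightarrow> 'a \<Rightarrow> real" and v :: "nat \<Rightarrow> real"
  assumes indep: "indep_vars (\<lambda>_. borel) \<xi> UNIV"
    and rv: "\<And>k. \<xi> k \<in> borel_measurable M"
    and bnd: "\<And>k u. \<bar>u\<bar> \<le> a \<Longrightarrow> integrable M (\<lambda>\<omega>. exp (u * \<xi> k \<omega>)) \<and> expectation (\<lambda>\<omega>. exp (u * \<xi> k \<omega>)) \<le> exp (K * u^2)"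
    and v: "\<And>k. \<bar>v k\<bar> \<le> 2" and s: "0 \<le> s" "2 * s \<le> a" and K: "K \<ge> 0"
  shows "prob {\<omega> \<in> space M. t \<le> (\<Sum>k<n. v k * \<xi> k \<omega>)} \<le> exp (- s * t + 4 * K * real n * s^2)"
proof -
  define A where "A = {\<omega> \<in> space M. t \<le> (\<Sum>k<n. v k * \<xi> k \<omega>)}"
  define Y where "Y k \<omega> = exp (s * v k * \<xi> k \<omega>)" for k \<omega>
  have A: "A \<in> events" unfolding A_def using rv by measurable
  have indY: "indep_vars (\<lambda>_. borel) Y {..<n}"
  proof -
    have "indep_vars (\<lambda>_. borel) (\<lambda>k \<omega>. (\<lambda>x. exp (s * v k * x)) (\<xi> k \<omega>)) UNIV"
      by (rule indep_vars_compose2[OF indep]) measurable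
    then show ?thesis unfolding Y_def by (rule indep_vars_subset) simp
  qed
  have su: "\<bar>s * v k\<bar> \<le> a" for k
  proof -
    have "\<bar>s * v k\<bar> = s * \<bar>v k\<bar>" using s by (simp add: abs_mult)
    also have "\<dots> \<le> s * 2" using s v[of k] by (intro mult_left_mono) auto
    finally show ?thesis using s by simp
  qed
  have intY: "integrable M (Y k)" for k unfolding Y_def using bnd[OF su[of k]] by simp
  have intP: "integrable M (\<lambda>\<omega>. \<Prod>k<n. Y k \<omega>)"
    by (rule indep_vars_integrable[OF _ indY]) (auto simp: intY)
  have EP: "expectation (\<lambda>\<omega>. \<Prod>k<n. Y k \<omega>) = (\<Prod>k<n. expectation (Y k))"
    by (rule indep_vars_lebesgue_integral[OF _ indY]) (auto simp: intY)
  have eq: "exp (s * (\<Sum>k<n. v k * \<xi> k \<omega>) - s * t) = exp (- s * t) * (\<Prod>k<n. Y k \<omega>)" for \<omega>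
  proof -
    have "exp (s * (\<Sum>k<n. v k * \<xi> k \<omega>) - s * t) = exp (- s * t) * exp (\<Sum>k<n. s * v k * \<xi> k \<omega>)"
      by (simp add: sum_distrib_left mult_ac flip: exp_add)
    also have "\<dots> = exp (- s * t) * (\<Prod>k<n. Y k \<omega>)" unfolding Y_def by (simp add: exp_sum)
    finally show ?thesis .
  qed
  have "prob A = expectation (indicator A)" using A by (simp add: Int_absorb2 sets.sets_into_space)
  also have "\<dots> \<le> expectation (\<lambda>\<omega>. exp (- s * t) * (\<Prod>k<n. Y k \<omega>))"
  proof (rule integral_mono)
    show "integrable M (indicator A :: 'a \<Rightarrow> real)"
      by (rule integrable_real_indicator[OF A]) (simp add: less_top[symmetric])
    show "integrable M (\<lambda>\<omega>. exp (- s * t) * (\<Prod>k<n. Y k \<omega>))" using intP by simp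
    fix \<omega> assume "\<omega> \<in> space M"
    show "indicator A \<omega> \<le> exp (- s * t) * (\<Prod>k<n. Y k \<omega>)"
    proof (cases "\<omega> \<in> A")
      case True
      then have "0 \<le> s * (\<Sum>k<n. v k * \<xi> k \<omega>) - s * t" unfolding A_def using s
        by (simp add: right_diff_distrib[symmetric])
      then have "1 \<le> exp (s * (\<Sum>k<n. v k * \<xi> k \<omega>) - s * t)" by simp
      then show ?thesis using True eq by simp
    next
      case False then show ?thesis by (simp add: Y_def prod_nonneg)
    qed
  qed
  also have "\<dots> = exp (- s * t) * (\<Prod>k<n. expectation (Y k))" using EP by simp
  also have "\<dots> \<le> exp (- s * t) * (\<Prod>k<n. exp (4 * K * s^2))"
  proof (intro mult_left_mono prod_mono conjI)
    fix k
    show "0 \<le> expectation (Y k)" unfolding Y_def by simp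
    have "expectation (Y k) \<le> exp (K * (s * v k)^2)" unfolding Y_def using bnd[OF su[of k]] by (simp add: mult_ac)
    also have "\<dots> \<le> exp (4 * K * s^2)"
    proof -
      have "(v k)^2 \<le> 2^2" using v[of k] by (metis abs_le_square_iff abs_numeral)
      then have "s^2 * (v k)^2 \<le> s^2 * 4" by (intro mult_left_mono) auto
      then have "K * (s^2 * (v k)^2) \<le> K * (s^2 * 4)" by (rule mult_left_mono[OF _ K])
      then have "K * (s * v k)^2 \<le> 4 * K * s^2" by (simp add: power_mult_distrib mult_ac)
      then show ?thesis by simp
    qed
    finally show "expectation (Y k) \<le> exp (4 * K * s^2)" .
  qed simp
  also have "\<dots> = exp (- s * t + 4 * K * real n * s^2)"
    by (simp add: prod_constant exp_add[symmetric] exp_of_nat_mult[symmetric] mult_ac)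
  finally show ?thesis unfolding A_def .
qed

end

lemma sym_toeplitz_sym: "sym_toeplitz a i j = sym_toeplitz a j i"
  unfolding sym_toeplitz_def by auto

lemma wt_bound: "\<bar>wt n m k\<bar> \<le> 2"
  unfolding wt_def by (auto simp: abs_mult)

lemma sigma_le_lam:
  assumes n: "n > 0"
  shows "\<exists>m<2*n. sigma_max n (sym_toeplitz a) \<le> \<bar>lam n a m\<bar>"
proof -
  define L where "L = Max ((\<lambda>m. \<bar>lam n a m\<bar>) ` {..<2*n})"
  have fin: "finite ((\<lambda>m. \<bar>lam n a m\<bar>) ` {..<2*n})" by simp
  have ne: "(\<lambda>m. \<bar>lam n a m\<bar>) ` {..<2*n} \<noteq> {}"
  proof -
    have "0 \<in> {..<2*n}" using n by simp
    then show ?thesis by blast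
  qed
  have Lb: "\<bar>lam n a m\<bar> \<le> L" if "m < 2*n" for m
    unfolding L_def by (rule Max_ge[OF fin]) (use that in auto)
  have L0: "L \<ge> 0" using Lb[of 0] n by auto
  have "L \<in> (\<lambda>m. \<bar>lam n a m\<bar>) ` {..<2*n}" unfolding L_def by (rule Max_in[OF fin ne])
  then obtain m where m: "m < 2*n" "L = \<bar>lam n a m\<bar>" by auto
  have "sigma_max n (sym_toeplitz a) \<le> L"
    by (rule sigma_max_le[OF sym_toeplitz_sym L0 quad_bound[OF n Lb]])
  with m show ?thesis by auto
qed

theorem mainTheorem3:
  fixes M :: "'a measure" and \<xi> :: "nat \<Rightarrow> 'a \<Rightarrow> real"
  assumes "prob_space M"
    and rv: "\<And>k. \<xi> k \<in> borel_measurable M"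
    and indep: "prob_space.indep_vars M (\<lambda>_. borel) \<xi> UNIV"
    and ident: "\<And>k. distr M borel (\<xi> k) = distr M borel (\<xi> 0)"
    and int1: "integrable M (\<xi> 0)"
    and mean0: "prob_space.expectation M (\<xi> 0) = 0"
    and int2: "integrable M (\<lambda>\<omega>. (\<xi> 0 \<omega>)^2)"
    and varpos: "prob_space.variance M (\<xi> 0) > 0"
    and mgf: "\<exists>\<delta>>0. \<forall>t\<in>{-\<delta><..<\<delta>}. integrable M (\<lambda>\<omega>. exp (t * \<xi> 0 \<omega>))"
  shows "\<exists>C0>0. \<exists>C1>0. \<forall>n\<ge>1.
           prob_space.prob M {\<omega> \<in> space M.
              sigma_max n (sym_toeplitz (\<lambda>k. \<xi> k \<omega>))
                \<ge> C0 * sqrt (real (2*n) * ln (real (2*n)))}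
           \<le> C1 / (real (2*n))^2"
proof -
  interpret prob_space M by fact
  obtain \<delta> where \<delta>: "\<delta> > 0" "\<forall>t\<in>{-\<delta><..<\<delta>}. integrable M (\<lambda>\<omega>. exp (t * \<xi> 0 \<omega>))"
    using mgf by blast
  define a where "a = \<delta> / 2"
  have a: "a > 0" using \<delta> by (simp add: a_def)
  have ia0: "integrable M (\<lambda>\<omega>. exp (u * \<xi> 0 \<omega>))" if "\<bar>u\<bar> \<le> a" for u
  proof -
    have "u \<in> {-\<delta><..<\<delta>}" using that \<delta>(1) unfolding a_def by auto
    then show ?thesis using \<delta>(2) by blast
  qed
  have tr_int: "integrable M (\<lambda>\<omega>. f (\<xi> k \<omega>)) = integrable M (\<lambda>\<omega>. f (\<xi> 0 \<omega>))"
    if f: "f \<in> borel_measurable borel" for f :: "real \<Rightarrow> real" and k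
  proof -
    have "integrable M (\<lambda>\<omega>. f (\<xi> k \<omega>)) = integrable (distr M borel (\<xi> k)) f"
      by (rule integrable_distr_eq[symmetric, OF rv f])
    also have "\<dots> = integrable (distr M borel (\<xi> 0)) f" using ident[of k] by simp
    also have "\<dots> = integrable M (\<lambda>\<omega>. f (\<xi> 0 \<omega>))" by (rule integrable_distr_eq[OF rv f])
    finally show ?thesis .
  qed
  have tr_exp: "expectation (\<lambda>\<omega>. f (\<xi> k \<omega>)) = expectation (\<lambda>\<omega>. f (\<xi> 0 \<omega>))"
    if f: "f \<in> borel_measurable borel" for f :: "real \<Rightarrow> real" and k
  proof -
    have "expectation (\<lambda>\<omega>. f (\<xi> k \<omega>)) = integral\<^sup>L (distr M borel (\<xi> k)) f"
      by (rule integral_distr[symmetric, OF rv f])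
    also have "\<dots> = integral\<^sup>L (distr M borel (\<xi> 0)) f" using ident[of k] by simp
    also have "\<dots> = expectation (\<lambda>\<omega>. f (\<xi> 0 \<omega>))" by (rule integral_distr[OF rv f])
    finally show ?thesis .
  qed
  define K where "K = (expectation (\<lambda>\<omega>. exp (a * \<xi> 0 \<omega>)) + expectation (\<lambda>\<omega>. exp ((-a) * \<xi> 0 \<omega>))) / a^2"
  have K0: "K \<ge> 0" unfolding K_def
    by (intro divide_nonneg_pos add_nonneg_nonneg integral_nonneg) (use a in auto)
  have bnd: "integrable M (\<lambda>\<omega>. exp (u * \<xi> k \<omega>)) \<and> expectation (\<lambda>\<omega>. exp (u * \<xi> k \<omega>)) \<le> exp (K * u^2)"
    if u: "\<bar>u\<bar> \<le> a" for k u
  proof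
    have m: "(\<lambda>x. exp (u * x)) \<in> borel_measurable borel" by measurable
    show "integrable M (\<lambda>\<omega>. exp (u * \<xi> k \<omega>))" using tr_int[OF m, of k] ia0[OF u] by simp
    have "expectation (\<lambda>\<omega>. exp (u * \<xi> k \<omega>)) = expectation (\<lambda>\<omega>. exp (u * \<xi> 0 \<omega>))"
      using tr_exp[OF m, of k] by simp
    also have "\<dots> \<le> exp (K * u^2)" unfolding K_def
      by (rule mgf_bound[OF int1 mean0 a ia0 u])
    finally show "expectation (\<lambda>\<omega>. exp (u * \<xi> k \<omega>)) \<le> exp (K * u^2)" .
  qed
  define c where "c = a / 2"
  have c: "c > 0" using a by (simp add: c_def)
  define C0 where "C0 = (3 + 2 * K * c^2) / c"
  have C0: "C0 > 0" unfolding C0_def using c K0 by (intro divide_pos_pos) (auto intro!: add_pos_nonneg)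
  have final: "\<forall>n\<ge>1. prob {\<omega> \<in> space M. sigma_max n (sym_toeplitz (\<lambda>k. \<xi> k \<omega>)) \<ge> C0 * sqrt (real (2*n) * ln (real (2*n)))}
        \<le> 2 / (real (2*n))^2"
  proof (intro allI impI)
    fix n :: nat assume n1: "n \<ge> 1"
    have n: "n > 0" using n1 by simp
    define N where "N = real (2*n)"
    have N2: "N \<ge> 2" unfolding N_def using n1 by simp
    have lnN: "ln N > 0" using N2 by simp
    have lnle: "ln N \<le> N" using ln_le_minus_one[of N] N2 by simp
    define t where "t = C0 * sqrt (N * ln N)"
    define s where "s = c * sqrt (ln N / N)"
    have s0: "s \<ge> 0" unfolding s_def using c lnN N2 by simp
    have "sqrt (ln N / N) \<le> 1" using lnle N2 by (simp add: divide_le_eq_1)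
    then have s2a: "2 * s \<le> a" unfolding s_def c_def using a
      by (simp add: mult_left_le)
    have sq: "sqrt (ln N / N) * sqrt (N * ln N) = ln N"
    proof -
      have "sqrt (ln N / N) * sqrt (N * ln N) = sqrt ((ln N)^2)"
        unfolding real_sqrt_mult[symmetric] using N2 by (simp add: power2_eq_square)
      then show ?thesis using lnN by simp
    qed
    have s2: "s^2 = c^2 * ln N / N" unfolding s_def using lnN N2 by (simp add: power_mult_distrib)
    have expo: "- s * t + 4 * K * real n * s^2 = - 3 * ln N"
    proof -
      have "s * t = c * C0 * ln N" unfolding s_def t_def using sq by (simp add: mult_ac)
      also have "c * C0 = 3 + 2 * K * c^2" unfolding C0_def using c by simp
      finally have st: "s * t = (3 + 2 * K * c^2) * ln N" .
      have "4 * K * real n * s^2 = 2 * K * c^2 * ln N * (2 * real n / N)"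
        unfolding s2 by (simp add: field_simps)
      also have "2 * real n / N = 1" unfolding N_def using n by simp
      finally have "4 * K * real n * s^2 = 2 * K * c^2 * ln N" by simp
      with st show ?thesis by (simp add: algebra_simps)
    qed
    have e3: "exp (- 3 * ln N) = 1 / N^3"
    proof -
      have "exp (- 3 * ln N) = inverse (exp (real 3 * ln N))" by (simp add: exp_minus[symmetric])
      also have "\<dots> = inverse (exp (ln N) ^ 3)" by (simp only: exp_of_nat_mult)
      also have "\<dots> = 1 / N^3" using N2 by (simp add: inverse_eq_divide)
      finally show ?thesis .
    qed
    have pb: "prob {\<omega> \<in> space M. t \<le> (\<Sum>k<n. v k * \<xi> k \<omega>)} \<le> 1 / N^3" if v: "\<And>k. \<bar>v k\<bar> \<le> 2" for v
      using chernoff_sum[OF indep rv bnd v s0 s2a K0, where t=t and n=n] expo e3 by simp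
    define B where "B m = {\<omega> \<in> space M. t \<le> (\<Sum>k<n. wt n m k * \<xi> k \<omega>)}
       \<union> {\<omega> \<in> space M. t \<le> (\<Sum>k<n. (- wt n m k) * \<xi> k \<omega>)}" for m
    have B1: "{\<omega> \<in> space M. t \<le> (\<Sum>k<n. wt n m k * \<xi> k \<omega>)} \<in> events" for m using rv by measurable
    have B2: "{\<omega> \<in> space M. t \<le> (\<Sum>k<n. (- wt n m k) * \<xi> k \<omega>)} \<in> events" for m using rv by measurable
    have Bev: "B m \<in> events" for m unfolding B_def using B1 B2 by blast
    have sub: "{\<omega> \<in> space M. sigma_max n (sym_toeplitz (\<lambda>k. \<xi> k \<omega>)) \<ge> C0 * sqrt (real (2*n) * ln (real (2*n)))}
       \<subseteq> (\<Union>m\<in>{..<2*n}. B m)"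
    proof
      fix \<omega> assume "\<omega> \<in> {\<omega> \<in> space M. sigma_max n (sym_toeplitz (\<lambda>k. \<xi> k \<omega>)) \<ge> C0 * sqrt (real (2*n) * ln (real (2*n)))}"
      then have \<omega>: "\<omega> \<in> space M" and ge: "t \<le> sigma_max n (sym_toeplitz (\<lambda>k. \<xi> k \<omega>))"
        unfolding t_def N_def by auto
      obtain m where m: "m < 2*n" "sigma_max n (sym_toeplitz (\<lambda>k. \<xi> k \<omega>)) \<le> \<bar>lam n (\<lambda>k. \<xi> k \<omega>) m\<bar>"
        using sigma_le_lam[OF n] by blast
      have "t \<le> \<bar>lam n (\<lambda>k. \<xi> k \<omega>) m\<bar>" using ge m by linarith
      then have "t \<le> (\<Sum>k<n. wt n m k * \<xi> k \<omega>) \<or> t \<le> (\<Sum>k<n. (- wt n m k) * \<xi> k \<omega>)"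
        unfolding lam_def by (auto simp: sum_negf abs_if split: if_splits)
      then have "\<omega> \<in> B m" unfolding B_def using \<omega> by auto
      then show "\<omega> \<in> (\<Union>m\<in>{..<2*n}. B m)" using m by auto
    qed
    have "prob {\<omega> \<in> space M. sigma_max n (sym_toeplitz (\<lambda>k. \<xi> k \<omega>)) \<ge> C0 * sqrt (real (2*n) * ln (real (2*n)))}
        \<le> prob (\<Union>m\<in>{..<2*n}. B m)"
      by (rule finite_measure_mono[OF sub]) (use Bev in auto)
    also have "\<dots> \<le> (\<Sum>m<2*n. prob (B m))"
      by (rule finite_measure_subadditive_finite) (use Bev in auto)
    also have "\<dots> \<le> (\<Sum>m<2*n. 2 / N^3)"
    proof (rule sum_mono)
      fix m
      have "prob (B m) \<le> prob {\<omega> \<in> space M. t \<le> (\<Sum>k<n. wt n m k * \<xi> k \<omega>)}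
          + prob {\<omega> \<in> space M. t \<le> (\<Sum>k<n. (- wt n m k) * \<xi> k \<omega>)}"
        unfolding B_def by (rule measure_Un_le[OF B1 B2])
      also have "\<dots> \<le> 1 / N^3 + 1 / N^3"
        by (intro add_mono pb) (auto simp: wt_bound)
      finally show "prob (B m) \<le> 2 / N^3" by simp
    qed
    also have "\<dots> = 2 / N^2" unfolding N_def using n by (simp add: power3_eq_cube power2_eq_square)
    finally show "prob {\<omega> \<in> space M. sigma_max n (sym_toeplitz (\<lambda>k. \<xi> k \<omega>)) \<ge> C0 * sqrt (real (2*n) * ln (real (2*n)))}
        \<le> 2 / (real (2*n))^2" unfolding N_def .
  qed
  show ?thesis
    by (rule exI[of _ C0], rule conjI[OF C0], rule exI[of _ 2], rule conjI, simp, rule final)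
qed

end
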